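(* Let $n\ge 2$ and $\underline a\in I^n$ with $\Omega(\underline a)=\{i_1,\dots,i_s\}$, $i_1<\dots<i_s$. Then for any $k,l\in\Omega(\underline a)$, $$D_{kl}(x^{\underline a}x_kx_l)\in\mathrm{span}_{\mathbb F}\{D_{i_ji_{j+1}}(x^{\underline a}x_{i_j}x_{i_{j+1}})\mid 1\le j\le s-1\}.$$
   Context: $\mathbb F$ is a field of characteristic $p>2$, $I=\{0,\dots,p-1\}$. $\mathcal A(n)$ is the truncated polynomial algebra with basis $x^{\underline a}=x_1^{a_1}\cdots x_n^{a_n}$, $\underline a\in I^n$, and $x^{\underline a}x^{\underline b}=x^{\underline a+\underline b}$ ($=0$ if $\underline a+\underline b\notin I^n$); $\partial_i$ are the derivations with $\partial_i(x_j)=\delta_{ij}$, and $D_{ij}(f)=\partial_j(f)\partial_i-\partial_i(f)\partial_j\in W(n)=\mathrm{Der}\,\mathcal A(n)$. For $\underline a\in I^n$, $\Omega(\underline a)=\{i\mid a_i\neq p-1\}$. *)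

theory Defs
  imports Main
begin

text \<open>Truncated polynomial algebra A(n) over a field of characteristic p.
  Exponent vectors are functions nat => nat supported on the index set {1..n}
  with entries in I = {0..p-1}.  An element of A(n) is a coefficient function
  on exponent vectors (only the values on valid exponents matter).\<close>

type_synonym expo = "nat \<Rightarrow> nat"
type_synonym 'a tpoly = "expo \<Rightarrow> 'a"

definition addv :: "expo \<Rightarrow> expo \<Rightarrow> expo" where
  "addv a b = (\<lambda>i. a i + b i)"

definition exps :: "nat \<Rightarrow> nat \<Rightarrow> expo set" where
  "exps n p = {a. (\<forall>i\<in>{1..n}. a i < p) \<and> (\<forall>i. i \<notin> {1..n} \<longrightarrow> a i = 0)}"

definition monom_t :: "nat \<Rightarrow> nat \<Rightarrow> expo \<Rightarrow> 'a::field tpoly" where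
  "monom_t n p a = (\<lambda>b. if a \<in> exps n p \<and> b = a then 1 else 0)"

definition unitv :: "nat \<Rightarrow> expo" where
  "unitv i = (\<lambda>j. if j = i then 1 else 0)"

definition xvar :: "nat \<Rightarrow> nat \<Rightarrow> nat \<Rightarrow> 'a::field tpoly" where
  "xvar n p i = monom_t n p (unitv i)"

text \<open>Multiplication in A(n): x^a x^b = x^(a+b), or 0 if a+b is not in I^n.\<close>
definition tmul :: "nat \<Rightarrow> nat \<Rightarrow> 'a::field tpoly \<Rightarrow> 'a tpoly \<Rightarrow> 'a tpoly" where
  "tmul n p f g = (\<lambda>c. if c \<in> exps n p then
      (\<Sum>a\<in>exps n p. \<Sum>b\<in>exps n p. if addv a b = c then f a * g b else 0) else 0)"

text \<open>The partial derivative: d_i x^a = a_i x^(a - e_i).\<close>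
definition pderiv_t :: "nat \<Rightarrow> nat \<Rightarrow> nat \<Rightarrow> 'a::field tpoly \<Rightarrow> 'a tpoly" where
  "pderiv_t n p i f = (\<lambda>c. if c \<in> exps n p \<and> addv c (unitv i) \<in> exps n p
      then of_nat (c i + 1) * f (addv c (unitv i)) else 0)"

definition Dop :: "nat \<Rightarrow> nat \<Rightarrow> nat \<Rightarrow> nat \<Rightarrow> 'a::field tpoly \<Rightarrow> ('a tpoly \<Rightarrow> 'a tpoly)" where
  "Dop n p i j f = (\<lambda>g c. tmul n p (pderiv_t n p j f) (pderiv_t n p i g) c
                         - tmul n p (pderiv_t n p i f) (pderiv_t n p j g) c)"

definition Omega :: "nat \<Rightarrow> nat \<Rightarrow> expo \<Rightarrow> nat set" where
  "Omega n p a = {i\<in>{1..n}. a i \<noteq> p - 1}"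

definition in_span_ops :: "('b \<Rightarrow> 'c \<Rightarrow> 'a::field) \<Rightarrow> nat \<Rightarrow> (nat \<Rightarrow> 'b \<Rightarrow> 'c \<Rightarrow> 'a) \<Rightarrow> bool" where
  "in_span_ops v m w \<longleftrightarrow> (\<exists>c::nat \<Rightarrow> 'a. v = (\<lambda>g x. \<Sum>j<m. c j * w j g x))"

end

theory Submission imports Defs begin
lemma finite_exps: "finite (exps n p)"
proof -
  have "exps n p = {f. \<forall>x. (x \<in> {1..n} \<longrightarrow> f x \<in> {..<p}) \<and> (x \<notin> {1..n} \<longrightarrow> f x = 0)}"
    unfolding exps_def by auto
  then show ?thesis using finite_set_of_finite_funs[of "{1..n}" "{..<p}" 0] by simp
qed

lemma tmul_monom:
  assumes "a0 \<in> exps n p" "b0 \<in> exps n p"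
  shows "tmul n p (monom_t n p a0 :: 'a::field tpoly) (monom_t n p b0) = monom_t n p (addv a0 b0)"
proof (rule ext)
  fix c
  have 1: "\<And>a b. (if addv a b = c then (monom_t n p a0 :: 'a tpoly) a * monom_t n p b0 b else 0)
     = (if a = a0 then (if b = b0 then (if addv a0 b0 = c then 1 else 0) else 0) else 0)"
    using assms by (auto simp: monom_t_def)
  have "tmul n p (monom_t n p a0 :: 'a::field tpoly) (monom_t n p b0) c = 
     (if c \<in> exps n p then (\<Sum>a\<in>exps n p. \<Sum>b\<in>exps n p. (if a = a0 then (if b = b0 then (if addv a0 b0 = c then 1 else 0) else 0) else 0)) else 0)"
    unfolding tmul_def 1 by simp
  also have "\<dots> = monom_t n p (addv a0 b0) c"
  proof -
    define v :: 'a where "v = (if addv a0 b0 = c then 1 else 0)"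
    have "(\<Sum>a\<in>exps n p. \<Sum>b\<in>exps n p. (if a = a0 then (if b = b0 then v else 0) else 0))
        = (\<Sum>a\<in>exps n p. (if a = a0 then (\<Sum>b\<in>exps n p. (if b = b0 then v else 0)) else 0))"
      by (rule sum.cong) auto
    also have "\<dots> = v" using assms finite_exps[of n p] by simp
    finally show ?thesis using assms unfolding v_def monom_t_def by auto
  qed
  finally show "tmul n p (monom_t n p a0 :: 'a::field tpoly) (monom_t n p b0) c = monom_t n p (addv a0 b0) c" .
qed
lemma tmul_scal1: "tmul n p (\<lambda>c. s * f c) g = (\<lambda>c. s * tmul n p f g c)"
  unfolding tmul_def by (auto simp: sum_distrib_left mult.assoc intro!: ext sum.cong)

lemma addv_cancel: "addv c (unitv l) = addv m (unitv l) \<longleftrightarrow> c = m"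
proof
  assume "addv c (unitv l) = addv m (unitv l)"
  then have "\<And>i. c i + unitv l i = m i + unitv l i" unfolding addv_def by metis
  then show "c = m" by auto
qed simp

lemma pderiv_monom:
  assumes "m \<in> exps n p" "addv m (unitv l) \<in> exps n p"
  shows "pderiv_t n p l (monom_t n p (addv m (unitv l)) :: 'a::field tpoly)
     = (\<lambda>c. of_nat (m l + 1) * monom_t n p m c)"
  unfolding pderiv_t_def monom_t_def using assms by (auto simp: addv_cancel intro!: ext)
lemma Omega_step: "a \<in> exps n p \<Longrightarrow> k \<in> Omega n p a \<Longrightarrow> addv a (unitv k) \<in> exps n p"
  unfolding exps_def Omega_def addv_def unitv_def by force

lemma Omega_addv: "k \<noteq> l \<Longrightarrow> l \<in> Omega n p a \<Longrightarrow> l \<in> Omega n p (addv a (unitv k))"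
  unfolding Omega_def addv_def unitv_def by auto

lemma unitv_in: "1 < p \<Longrightarrow> k \<in> {1..n} \<Longrightarrow> unitv k \<in> exps n p"
  unfolding exps_def unitv_def by auto

lemma addv_comm2: "addv (addv a (unitv k)) (unitv l) = addv (addv a (unitv l)) (unitv k)"
  unfolding addv_def by (rule ext) simp

lemma addv_unitv_other: "k \<noteq> l \<Longrightarrow> addv a (unitv k) l = a l"
  unfolding addv_def unitv_def by simp

definition Gop :: "nat \<Rightarrow> nat \<Rightarrow> expo \<Rightarrow> nat \<Rightarrow> 'a::field tpoly \<Rightarrow> 'a tpoly" where
  "Gop n p a i g = tmul n p (monom_t n p (addv a (unitv i))) (pderiv_t n p i g)"

lemma Dop_X:
  assumes a: "a \<in> exps n p" and k: "k \<in> Omega n p a" and l: "l \<in> Omega n p a" and kl: "k \<noteq> l"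
  shows "Dop n p k l (monom_t n p (addv (addv a (unitv k)) (unitv l)) :: 'a::field tpoly) g c
     = of_nat (a l + 1) * Gop n p a k g c - of_nat (a k + 1) * Gop n p a l g c"
proof -
  have ak: "addv a (unitv k) \<in> exps n p" using Omega_step[OF a k] .
  have al: "addv a (unitv l) \<in> exps n p" using Omega_step[OF a l] .
  have akl: "addv (addv a (unitv k)) (unitv l) \<in> exps n p"
    using Omega_step[OF ak Omega_addv[OF kl l]] .
  have alk: "addv (addv a (unitv l)) (unitv k) \<in> exps n p" using akl addv_comm2 by metis
  have d1: "pderiv_t n p l (monom_t n p (addv (addv a (unitv k)) (unitv l)) :: 'a tpoly)
     = (\<lambda>c. of_nat (a l + 1) * monom_t n p (addv a (unitv k)) c)"
    using pderiv_monom[OF ak akl] addv_unitv_other[OF kl] by simp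
  have kl': "l \<noteq> k" using kl by simp
  have d2: "pderiv_t n p k (monom_t n p (addv (addv a (unitv k)) (unitv l)) :: 'a tpoly)
     = (\<lambda>c. of_nat (a k + 1) * monom_t n p (addv a (unitv l)) c)"
    using pderiv_monom[OF al alk] addv_unitv_other[OF kl'] addv_comm2 by metis
  show ?thesis unfolding Dop_def d1 d2 tmul_scal1 Gop_def by simp
qed

lemma telescope:
  fixes h :: "nat \<Rightarrow> 'b \<Rightarrow> 'c \<Rightarrow> 'a::field"
  assumes "u \<le> v" "v \<le> m"
  shows "\<exists>c. \<forall>g x. h u g x - h v g x = (\<Sum>j<m. c j * (h j g x - h (Suc j) g x))"
  using assms
proof (induction v)
  case 0
  then show ?case by (intro exI[of _ "\<lambda>_. 0"]) simp
next
  case (Suc v)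
  show ?case
  proof (cases "u = Suc v")
    case True
    then show ?thesis by (intro exI[of _ "\<lambda>_. 0"]) simp
  next
    case False
    with Suc.prems have "u \<le> v" "v \<le> m" by auto
    with Suc.IH obtain c where c: "\<forall>g x. h u g x - h v g x = (\<Sum>j<m. c j * (h j g x - h (Suc j) g x))"
      by blast
    have vm: "v \<in> {..<m}" using Suc.prems by simp
    show ?thesis
    proof (intro exI[of _ "\<lambda>j. c j + (if j = v then 1 else 0)"] allI)
      fix g x
      have "(\<Sum>j<m. (c j + (if j = v then 1 else 0)) * (h j g x - h (Suc j) g x))
         = (\<Sum>j<m. c j * (h j g x - h (Suc j) g x)) + (\<Sum>j<m. (if j = v then (h j g x - h (Suc j) g x) else 0))"
        unfolding sum.distrib[symmetric] by (rule sum.cong) (auto simp: distrib_right)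
      also have "\<dots> = h u g x - h v g x + (h v g x - h (Suc v) g x)"
        using c vm by simp
      finally show "h u g x - h (Suc v) g x = (\<Sum>j<m. (c j + (if j = v then 1 else 0)) * (h j g x - h (Suc j) g x))"
        by simp
    qed
  qed
qed

lemma telescope2:
  fixes h :: "nat \<Rightarrow> 'b \<Rightarrow> 'c \<Rightarrow> 'a::field"
  assumes "u \<le> m" "v \<le> m"
  shows "\<exists>c. \<forall>g x. h u g x - h v g x = (\<Sum>j<m. c j * (h j g x - h (Suc j) g x))"
proof (cases "u \<le> v")
  case True
  then show ?thesis using telescope assms by blast
next
  case False
  then obtain c where c: "\<forall>g x. h v g x - h u g x = (\<Sum>j<m. c j * (h j g x - h (Suc j) g x))"
    using telescope[of v u m h] assms by auto
  show ?thesis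
  proof (intro exI[of _ "\<lambda>j. - c j"] allI)
    fix g x
    have "h u g x - h v g x = - (h v g x - h u g x)" by simp
    also have "\<dots> = (\<Sum>j<m. - c j * (h j g x - h (Suc j) g x))"
      using c by (simp add: sum_negf[symmetric])
    finally show "h u g x - h v g x = (\<Sum>j<m. - c j * (h j g x - h (Suc j) g x))" .
  qed
qed
theorem lemma4p2:
  fixes p n :: nat and a :: expo and k l :: nat
  assumes "CHAR('a::field) = p" and "p > 2"
    and "n \<ge> 2"
    and "a \<in> exps n p"
    and "k \<in> Omega n p a" and "l \<in> Omega n p a"
  shows "let L = sorted_list_of_set (Omega n p a); s = length L;
             X = (\<lambda>u v. tmul n p (tmul n p (monom_t n p a :: 'a tpoly) (xvar n p u)) (xvar n p v))
         in in_span_ops (Dop n p k l (X k l)) (s - 1)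
              (\<lambda>j. Dop n p (L ! j) (L ! (j + 1)) (X (L ! j) (L ! (j + 1))))"
proof -
  note a = assms(4)
  define L where "L = sorted_list_of_set (Omega n p a)"
  define X where "X = (\<lambda>u v. tmul n p (tmul n p (monom_t n p a :: 'a tpoly) (xvar n p u)) (xvar n p v))"
  define \<alpha> :: "nat \<Rightarrow> 'a" where "\<alpha> i = of_nat (a i + 1)" for i
  have finO: "finite (Omega n p a)" unfolding Omega_def by simp
  have setL: "set L = Omega n p a" and distL: "distinct L" using finO unfolding L_def by auto
  have Osub: "\<And>i. i \<in> Omega n p a \<Longrightarrow> i \<in> {1..n}" unfolding Omega_def by auto
  have p1: "1 < p" using assms(2) by simp
  have XA: "X u v = monom_t n p (addv (addv a (unitv u)) (unitv v))"
    if "u \<in> Omega n p a" "v \<in> Omega n p a" for u v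
  proof -
    have "unitv u \<in> exps n p" "unitv v \<in> exps n p" using unitv_in[OF p1] Osub that by auto
    moreover have "addv a (unitv u) \<in> exps n p" using Omega_step[OF a that(1)] .
    ultimately show ?thesis unfolding X_def xvar_def using tmul_monom a by metis
  qed
  have anz: "\<alpha> i \<noteq> 0" if "i \<in> Omega n p a" for i
  proof -
    have "a i < p" using a Osub[OF that] unfolding exps_def by auto
    moreover have "a i \<noteq> p - 1" using that unfolding Omega_def by auto
    ultimately have "a i + 1 < p" by auto
    then have "\<not> p dvd (a i + 1)" by (rule nat_dvd_not_less[rotated]) simp
    then have "(of_nat (a i + 1) :: 'a) \<noteq> 0" using of_nat_eq_0_iff_char_dvd[where 'a='a, of "a i + 1"] assms(1) by metis
    then show ?thesis unfolding \<alpha>_def .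
  qed
  define H :: "nat \<Rightarrow> 'a tpoly \<Rightarrow> expo \<Rightarrow> 'a" where "H i g x = Gop n p a i g x / \<alpha> i" for i g x
  have W: "Dop n p u v (X u v) g x = \<alpha> u * \<alpha> v * (H u g x - H v g x)"
    if "u \<in> Omega n p a" "v \<in> Omega n p a" "u \<noteq> v" for u v g x
  proof -
    have "Dop n p u v (X u v) g x = \<alpha> v * Gop n p a u g x - \<alpha> u * Gop n p a v g x"
      unfolding XA[OF that(1,2)] Dop_X[OF a that] \<alpha>_def ..
    then show ?thesis unfolding H_def using anz[OF that(1)] anz[OF that(2)]
      by (simp add: right_diff_distrib)
  qed
  have main: "in_span_ops (Dop n p k l (X k l)) (length L - 1)
              (\<lambda>j. Dop n p (L ! j) (L ! (j + 1)) (X (L ! j) (L ! (j + 1))))"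
  proof (cases "k = l")
    case True
    show ?thesis unfolding in_span_ops_def
      by (intro exI[of _ "\<lambda>_. 0"]) (auto simp: True Dop_def intro!: ext)
  next
    case False
    obtain u where u: "u < length L" "L ! u = k" using assms(5) setL by (metis in_set_conv_nth)
    obtain v where v: "v < length L" "L ! v = l" using assms(6) setL by (metis in_set_conv_nth)
    define m where "m = length L - 1"
    have um: "u \<le> m" "v \<le> m" using u v unfolding m_def by auto
    obtain c where c: "\<forall>g x. H (L ! u) g x - H (L ! v) g x
        = (\<Sum>j<m. c j * (H (L ! j) g x - H (L ! (Suc j)) g x))"
      using telescope2[OF um, where h="\<lambda>j. H (L ! j)"] by auto
    have inO: "L ! j \<in> Omega n p a" "L ! Suc j \<in> Omega n p a" "L ! j \<noteq> L ! Suc j"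
      if "j < m" for j
    proof -
      have "j < length L" "Suc j < length L" using that unfolding m_def by auto
      then show "L ! j \<in> Omega n p a" "L ! Suc j \<in> Omega n p a" "L ! j \<noteq> L ! Suc j"
        using setL nth_mem[of j L] nth_mem[of "Suc j" L] nth_eq_iff_index_eq[OF distL] by auto
    qed
    show ?thesis unfolding in_span_ops_def m_def[symmetric]
    proof (intro exI[of _ "\<lambda>j. \<alpha> k * \<alpha> l * c j / (\<alpha> (L ! j) * \<alpha> (L ! Suc j))"] ext)
      fix g x
      have "Dop n p k l (X k l) g x = \<alpha> k * \<alpha> l * (H k g x - H l g x)"
        using W[OF assms(5,6) False] .
      also have "\<dots> = \<alpha> k * \<alpha> l * (\<Sum>j<m. c j * (H (L ! j) g x - H (L ! (Suc j)) g x))"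
        using c u v by simp
      also have "\<dots> = (\<Sum>j<m. \<alpha> k * \<alpha> l * c j / (\<alpha> (L ! j) * \<alpha> (L ! Suc j)) *
           Dop n p (L ! j) (L ! (j + 1)) (X (L ! j) (L ! (j + 1))) g x)"
        unfolding sum_distrib_left
      proof (rule sum.cong)
        fix j assume "j \<in> {..<m}"
        then have j: "j < m" by simp
        show "\<alpha> k * \<alpha> l * (c j * (H (L ! j) g x - H (L ! Suc j) g x)) =
          \<alpha> k * \<alpha> l * c j / (\<alpha> (L ! j) * \<alpha> (L ! Suc j)) *
          Dop n p (L ! j) (L ! (j + 1)) (X (L ! j) (L ! (j + 1))) g x"
          using W[OF inO[OF j]] anz[OF inO(1)[OF j]] anz[OF inO(2)[OF j]] by simp
      qed simp
      finally show "Dop n p k l (X k l) g x = (\<Sum>j<m. \<alpha> k * \<alpha> l * c j / (\<alpha> (L ! j) * \<alpha> (L ! Suc j)) *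
           Dop n p (L ! j) (L ! (j + 1)) (X (L ! j) (L ! (j + 1))) g x)" .
    qed
  qed
  then show ?thesis unfolding Let_def L_def X_def .
qed
end
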